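(* Let $\mathcal{G}$ be a directed graph with finite vertex set $\mathcal{V}_\mathcal{G}$ (totally ordered), edge set $\mathcal{E}_\mathcal{G}$, no self-loops, and nonnegative adjacency matrix $\mathbf{A}$ (with $A_{uv}>0$ iff $(u,v)\in\mathcal{E}_\mathcal{G}$), and let $\tilde{\mathbf{g}}\in\mathbb{R}^{|\mathcal{V}_\mathcal{G}|}$. Let $\tilde{\mathcal{E}}_\mathcal{G}=\{(u,v):(u,v)\in\mathcal{E}_\mathcal{G}\text{ or }(v,u)\in\mathcal{E}_\mathcal{G}\}$ and $m=|\tilde{\mathcal{E}}_\mathcal{G}|/2$. Let $\boldsymbol{\alpha}\in[0,1]^m$ collect the variables $\alpha_{uv}$ for $(u,v)\in\tilde{\mathcal{E}}_\mathcal{G}$ with $u<v$, and set $\alpha_{vu}:=1-\alpha_{uv}$. Define $f_A:\mathbb{R}^m\to\mathbb{R}^{|\mathcal{V}_\mathcal{G}|}$ by $[f_A(\boldsymbol{\alpha})]_u=\sum_{v:(u,v)\in\tilde{\mathcal{E}}_\mathcal{G}}(A_{uv}\alpha_{uv}-A_{vu}\alpha_{vu})$ and $\Psi(\boldsymbol{\alpha})=\|f_A(\boldsymbol{\alpha})-\tilde{\mathbf{g}}\|_2^2$. Then: (a) $\min_{\|\mathbf{y}\|_2\le1}\big(Q_1^{(g)}(\mathbf{y})-\langle\mathbf{y},\tilde{\mathbf{g}}\rangle\big)=-\min_{\boldsymbol{\alpha}\in[0,1]^m}\|f_A(\boldsymbol{\alpha})-\tilde{\mathbf{g}}\|_2$,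 so that the dual problem is $\min_{\boldsymbol{\alpha}\in[0,1]^m}\Psi(\boldsymbol{\alpha})$; (b) if $\boldsymbol{\alpha}^*$ minimizes $\Psi$ over $[0,1]^m$ and $f_A(\boldsymbol{\alpha}^* )\neq\tilde{\mathbf{g}}$, then $\mathbf{y}^*=-\frac{f_A(\boldsymbol{\alpha}^* )-\tilde{\mathbf{g}}}{\|f_A(\boldsymbol{\alpha}^* )-\tilde{\mathbf{g}}\|_2}$ minimizes $Q_1^{(g)}(\mathbf{y})-\langle\mathbf{y},\tilde{\mathbf{g}}\rangle$ over $\|\mathbf{y}\|_2\le1$; (c) for all $\boldsymbol{\alpha},\boldsymbol{\beta}\in\mathbb{R}^m$, $\|\nabla\Psi(\boldsymbol{\alpha})-\nabla\Psi(\boldsymbol{\beta})\|_2\le L\|\boldsymbol{\alpha}-\boldsymbol{\beta}\|_2$ with $L=4\max_{u\in\mathcal{V}_\mathcal{G}}\sum_{v\in\mathcal{V}_\mathcal{G}}(A_{uv}+A_{vu})^2$.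
   Context: $Q_1^{(g)}(\mathbf{y})=\sum_{u,v\in\mathcal{V}_\mathcal{G}}A_{uv}\max\{y_u-y_v,0\}$ is the Lovász extension of the directed cut function $\mathrm{cut}_\mathcal{G}(\mathcal{S})=\sum_{u\in\mathcal{S},v\notin\mathcal{S}}A_{uv}$. The set $\tilde{\mathcal{E}}_\mathcal{G}$ consists of ordered pairs, so $(u,v)$ and $(v,u)$ are distinct elements. *)

theory Defs
  imports "HOL-Analysis.Analysis"
begin

definition Etil :: "('v \<times> 'v) set \<Rightarrow> ('v \<times> 'v) set" where
  "Etil E = {(u, v). (u, v) \<in> E \<or> (v, u) \<in> E}"

definition Pidx :: "('v::{linorder,finite} \<times> 'v) set \<Rightarrow> ('v \<times> 'v) set" where
  "Pidx E = {(u, v). (u, v) \<in> Etil E \<and> u < v}"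

(* R^m is represented as the vectors in real^('v*'v) supported on Pidx E *)
definition Rm :: "('v::{linorder,finite} \<times> 'v) set \<Rightarrow> ((real, 'v \<times> 'v) vec) set" where
  "Rm E = {a. \<forall>i. i \<notin> Pidx E \<longrightarrow> a $ i = 0}"

definition box01 :: "('v::{linorder,finite} \<times> 'v) set \<Rightarrow> ((real, 'v \<times> 'v) vec) set" where
  "box01 E = {a \<in> Rm E. \<forall>i \<in> Pidx E. 0 \<le> a $ i \<and> a $ i \<le> 1}"

definition alph :: "((real, 'v::{linorder,finite} \<times> 'v) vec) \<Rightarrow> 'v \<Rightarrow> 'v \<Rightarrow> real" where
  "alph a u v = (if u < v then a $ (u, v) else 1 - a $ (v, u))"

definition fA :: "('v::{linorder,finite} \<Rightarrow> 'v \<Rightarrow> real) \<Rightarrow> ('v \<times> 'v) set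
                  \<Rightarrow> (real, 'v \<times> 'v) vec \<Rightarrow> (real, 'v) vec" where
  "fA A E a = (\<chi> u. \<Sum>v \<in> {v. (u, v) \<in> Etil E}. A u v * alph a u v - A v u * alph a v u)"

definition Psi :: "('v::{linorder,finite} \<Rightarrow> 'v \<Rightarrow> real) \<Rightarrow> ('v \<times> 'v) set
                  \<Rightarrow> (real, 'v) vec \<Rightarrow> (real, 'v \<times> 'v) vec \<Rightarrow> real" where
  "Psi A E g a = (norm (fA A E a - g))\<^sup>2"

(* Lovasz extension of the directed cut function *)
definition Q1 :: "('v::{linorder,finite} \<Rightarrow> 'v \<Rightarrow> real) \<Rightarrow> (real, 'v) vec \<Rightarrow> real" where
  "Q1 A y = (\<Sum>u\<in>UNIV. \<Sum>v\<in>UNIV. A u v * max (y $ u - y $ v) 0)"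

end

theory Submission
  imports Defs
begin

lemma Etil_sym: "(u,v) \<in> Etil E \<longleftrightarrow> (v,u) \<in> Etil E" by (auto simp: Etil_def)

lemma sum_Etil:
  fixes E :: "('v::finite \<times> 'v) set"
  shows "(\<Sum>u\<in>UNIV. \<Sum>v\<in>{v. (u,v)\<in>Etil E}. F u v) = (\<Sum>(u,v)\<in>Etil E. F u v)"
proof -
  have "Sigma UNIV (\<lambda>u. {v. (u,v)\<in>Etil E}) = Etil E" by auto
  then show ?thesis by (subst sum.Sigma) auto
qed

lemma sum_Etil_swap:
  fixes E :: "('v::finite \<times> 'v) set"
  shows "(\<Sum>(u,v)\<in>Etil E. F u v) = (\<Sum>(u,v)\<in>Etil E. F v u)"
  by (rule sum.reindex_bij_witness[where i=prod.swap and j=prod.swap]) (auto simp: Etil_def)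

lemma inner_fA:
  fixes A :: "'v::{linorder,finite} \<Rightarrow> 'v \<Rightarrow> real"
  shows "inner y (fA A E a) = (\<Sum>(u,v)\<in>Etil E. A u v * alph a u v * (y$u - y$v))"
proof -
  have "inner y (fA A E a) = (\<Sum>u\<in>UNIV. \<Sum>v\<in>{v. (u,v)\<in>Etil E}. y$u * (A u v * alph a u v) - y$u * (A v u * alph a v u))"
    by (simp add: fA_def inner_vec_def sum_distrib_left right_diff_distrib)
  also have "\<dots> = (\<Sum>(u,v)\<in>Etil E. y$u * (A u v * alph a u v)) - (\<Sum>(u,v)\<in>Etil E. y$u * (A v u * alph a v u))"
    by (simp add: sum_Etil sum_subtractf case_prod_unfold)
  also have "(\<Sum>(u,v)\<in>Etil E. y$u * (A v u * alph a v u)) = (\<Sum>(u,v)\<in>Etil E. y$v * (A u v * alph a u v))"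
    by (rule sum_Etil_swap)
  also have "(\<Sum>(u,v)\<in>Etil E. y$u * (A u v * alph a u v)) - \<dots> = (\<Sum>(u,v)\<in>Etil E. A u v * alph a u v * (y$u - y$v))"
    by (simp add: sum_subtractf[symmetric] case_prod_unfold algebra_simps)
  finally show ?thesis .
qed

lemma Q1_Etil:
  fixes A :: "'v::{linorder,finite} \<Rightarrow> 'v \<Rightarrow> real"
  assumes A_nonneg: "\<forall>u v. 0 \<le> A u v" and A_edge: "\<forall>u v. 0 < A u v \<longleftrightarrow> (u, v) \<in> E"
  shows "Q1 A y = (\<Sum>(u,v)\<in>Etil E. A u v * max (y$u - y$v) 0)"
proof -
  have "Q1 A y = (\<Sum>(u,v)\<in>UNIV. A u v * max (y$u - y$v) 0)"
    unfolding Q1_def by (simp add: sum.cartesian_product)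
  also have "\<dots> = (\<Sum>(u,v)\<in>Etil E. A u v * max (y$u - y$v) 0)"
  proof (rule sum.mono_neutral_right)
    show "\<forall>i\<in>UNIV - Etil E. (case i of (u, v) \<Rightarrow> A u v * max (y $ u - y $ v) 0) = 0"
    proof
      fix i assume "i \<in> UNIV - Etil E"
      then obtain u v where i: "i = (u,v)" "(u,v) \<notin> E" by (cases i) (auto simp: Etil_def)
      have "0 \<le> A u v" "\<not> 0 < A u v" using A_nonneg A_edge i(2) by auto
      then have "A u v = 0" by linarith
      then show "(case i of (u, v) \<Rightarrow> A u v * max (y $ u - y $ v) 0) = 0" using i by simp
    qed
  qed auto
  finally show ?thesis .
qed

lemma alph_01:
  assumes "a \<in> box01 E" "(u,v) \<in> Etil E" "u \<noteq> v"
  shows "0 \<le> alph a u v \<and> alph a u v \<le> 1"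
proof (cases "u < v")
  case True
  then have "(u,v) \<in> Pidx E" using assms by (simp add: Pidx_def)
  then show ?thesis using assms True by (simp add: box01_def alph_def)
next
  case False
  then have "v < u" using assms(3) by simp
  then have "(v,u) \<in> Pidx E" using assms by (simp add: Pidx_def Etil_sym)
  then show ?thesis using assms False by (simp add: box01_def alph_def)
qed

lemma weak:
  fixes A :: "'v::{linorder,finite} \<Rightarrow> 'v \<Rightarrow> real"
  assumes A_nonneg: "\<forall>u v. 0 \<le> A u v" and A_edge: "\<forall>u v. 0 < A u v \<longleftrightarrow> (u, v) \<in> E"
    and no_loops: "\<forall>u. (u, u) \<notin> E" and a: "a \<in> box01 E"
  shows "inner y (fA A E a) \<le> Q1 A y"
  unfolding inner_fA Q1_Etil[OF A_nonneg A_edge]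
proof (rule sum_mono)
  fix p assume p: "p \<in> Etil E"
  obtain u v where uv: "p = (u,v)" by (cases p)
  have "u \<noteq> v" using p uv no_loops by (auto simp: Etil_def)
  then have al: "0 \<le> alph a u v \<and> alph a u v \<le> 1" using alph_01[OF a] p uv by auto
  have "alph a u v * (y$u - y$v) \<le> max (y$u - y$v) 0"
  proof (cases "y$u - y$v \<ge> 0")
    case True then show ?thesis using al mult_right_mono[of "alph a u v" 1 "y$u - y$v"] by auto
  next
    case False then show ?thesis using al by (simp add: mult_nonneg_nonpos)
  qed
  then have "A u v * (alph a u v * (y$u - y$v)) \<le> A u v * max (y$u - y$v) 0"
    using A_nonneg by (simp add: mult_left_mono)
  then show "(case p of (u, v) \<Rightarrow> A u v * alph a u v * (y $ u - y $ v))
         \<le> (case p of (u, v) \<Rightarrow> A u v * max (y $ u - y $ v) 0)" using uv by (simp add: mult.assoc)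
qed

lemma attain:
  fixes A :: "'v::{linorder,finite} \<Rightarrow> 'v \<Rightarrow> real"
  assumes A_nonneg: "\<forall>u v. 0 \<le> A u v" and A_edge: "\<forall>u v. 0 < A u v \<longleftrightarrow> (u, v) \<in> E"
    and no_loops: "\<forall>u. (u, u) \<notin> E"
  shows "\<exists>a\<in>box01 E. inner y (fA A E a) = Q1 A y"
proof -
  define a :: "(real, 'v \<times> 'v) vec" where
    "a = (\<chi> p. if p \<in> Pidx E then (if y$(fst p) \<ge> y$(snd p) then 1 else 0) else 0)"
  have a_in: "a \<in> box01 E" by (simp add: a_def box01_def Rm_def)
  have "inner y (fA A E a) = (\<Sum>(u,v)\<in>Etil E. A u v * max (y$u - y$v) 0)"
    unfolding inner_fA
  proof (rule sum.cong[OF refl])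
    fix p assume p: "p \<in> Etil E"
    obtain u v where uv: "p = (u,v)" by (cases p)
    have "u \<noteq> v" using p uv no_loops by (auto simp: Etil_def)
    have "alph a u v * (y$u - y$v) = max (y$u - y$v) 0"
    proof (cases "u < v")
      case True
      then have "(u,v) \<in> Pidx E" using p uv by (simp add: Pidx_def)
      then show ?thesis using True by (simp add: a_def alph_def)
    next
      case False
      then have "v < u" using \<open>u \<noteq> v\<close> by simp
      then have "(v,u) \<in> Pidx E" using p uv by (simp add: Pidx_def Etil_sym)
      then show ?thesis using False by (simp add: a_def alph_def)
    qed
    then show "(case p of (u, v) \<Rightarrow> A u v * alph a u v * (y $ u - y $ v)) =
          (case p of (u, v) \<Rightarrow> A u v * max (y $ u - y $ v) 0)" using uv by (simp add: mult.assoc)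
  qed
  then show ?thesis using a_in Q1_Etil[OF A_nonneg A_edge] by auto
qed

definition sg :: "(real, 'v::{linorder,finite} \<times> 'v) vec \<Rightarrow> 'v \<Rightarrow> 'v \<Rightarrow> real" where
  "sg h u v = (if u < v then h $ (u, v) else - h $ (v, u))"

definition lin :: "('v::{linorder,finite} \<Rightarrow> 'v \<Rightarrow> real) \<Rightarrow> ('v \<times> 'v) set
                  \<Rightarrow> (real, 'v \<times> 'v) vec \<Rightarrow> (real, 'v) vec" where
  "lin A E h = (\<chi> u. \<Sum>v \<in> {v. (u, v) \<in> Etil E}. (A u v + A v u) * sg h u v)"

lemma fA_lin:
  fixes A :: "'v::{linorder,finite} \<Rightarrow> 'v \<Rightarrow> real"
  assumes no_loops: "\<forall>u. (u, u) \<notin> E"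
  shows "fA A E a = lin A E a + fA A E 0"
  unfolding vec_eq_iff
proof
  fix u
  have "(\<Sum>v \<in> {v. (u, v) \<in> Etil E}. A u v * alph a u v - A v u * alph a v u)
     = (\<Sum>v \<in> {v. (u, v) \<in> Etil E}. (A u v + A v u) * sg a u v + (A u v * alph 0 u v - A v u * alph 0 v u))"
  proof (rule sum.cong[OF refl])
    fix v assume "v \<in> {v. (u, v) \<in> Etil E}"
    then have "u \<noteq> v" using no_loops by (auto simp: Etil_def)
    then show "A u v * alph a u v - A v u * alph a v u = (A u v + A v u) * sg a u v + (A u v * alph 0 u v - A v u * alph 0 v u)"
      by (cases "u < v") (auto simp: alph_def sg_def algebra_simps)
  qed
  then show "fA A E a $ u = (lin A E a + fA A E 0) $ u"
    by (simp add: fA_def lin_def sum.distrib)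
qed

lemma sg_add: "sg (x + y) u v = sg x u v + sg y u v" by (simp add: sg_def)
lemma sg_scale: "sg (c *\<^sub>R x) u v = c * sg x u v" by (simp add: sg_def)
lemma sg_diff: "sg (x - y) u v = sg x u v - sg y u v" by (simp add: sg_def)

lemma lin_linear:
  fixes A :: "'v::{linorder,finite} \<Rightarrow> 'v \<Rightarrow> real"
  shows "linear (lin A E)"
proof (rule linearI)
  fix x y :: "(real, 'v \<times> 'v) vec" and c :: real
  show "lin A E (x + y) = lin A E x + lin A E y"
    by (simp add: vec_eq_iff lin_def sg_add distrib_left sum.distrib)
  show "lin A E (c *\<^sub>R x) = c *\<^sub>R lin A E x"
    by (simp add: vec_eq_iff lin_def sg_scale sum_distrib_left algebra_simps)
qed

lemma lin_bl: "bounded_linear (lin A E)"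
  using lin_linear linear_conv_bounded_linear by blast

lemma fA_affine:
  fixes A :: "'v::{linorder,finite} \<Rightarrow> 'v \<Rightarrow> real"
  assumes no_loops: "\<forall>u. (u, u) \<notin> E"
  shows "fA A E ((1-t) *\<^sub>R a + t *\<^sub>R b) = (1-t) *\<^sub>R fA A E a + t *\<^sub>R fA A E b"
proof -
  interpret L: linear "lin A E" by (rule lin_linear)
  have "lin A E ((1-t) *\<^sub>R a + t *\<^sub>R b) = (1-t) *\<^sub>R lin A E a + t *\<^sub>R lin A E b"
    by (simp only: L.add L.scale)
  then show ?thesis
    apply (subst (1 2 3) fA_lin[OF no_loops])
    by (simp add: algebra_simps)
qed

lemma box01_convex:
  assumes "a \<in> box01 E" "b \<in> box01 E" "0 \<le> t" "t \<le> 1"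
  shows "(1-t) *\<^sub>R a + t *\<^sub>R b \<in> box01 E"
  using assms unfolding box01_def Rm_def
  by (auto intro!: convex_bound_le simp: convex_bound_le)

lemma varineq:
  fixes A :: "'v::{linorder,finite} \<Rightarrow> 'v \<Rightarrow> real"
  assumes no_loops: "\<forall>u. (u, u) \<notin> E"
    and a0: "a0 \<in> box01 E" and mn: "\<forall>a\<in>box01 E. norm (fA A E a0 - g) \<le> norm (fA A E a - g)"
    and b: "b \<in> box01 E"
  shows "0 \<le> inner (fA A E a0 - g) (fA A E b - fA A E a0)"
proof (rule ccontr)
  define r where "r = fA A E a0 - g"
  define d where "d = fA A E b - fA A E a0"
  assume "\<not> 0 \<le> inner (fA A E a0 - g) (fA A E b - fA A E a0)"
  then have neg: "inner r d < 0" by (simp add: r_def d_def)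
  have key: "inner r r \<le> inner r r + 2 * t * inner r d + t * t * inner d d" if t: "0 \<le> t" "t \<le> 1" for t
  proof -
    have eq: "fA A E ((1-t) *\<^sub>R a0 + t *\<^sub>R b) - g = r + t *\<^sub>R d"
      unfolding fA_affine[OF no_loops] r_def d_def by (simp add: algebra_simps)
    have "norm r \<le> norm (r + t *\<^sub>R d)"
      using mn box01_convex[OF a0 b t] eq r_def by metis
    then have "norm r ^ 2 \<le> norm (r + t *\<^sub>R d) ^ 2" by (simp add: power_mono)
    then show ?thesis by (simp add: power2_norm_eq_inner inner_add inner_commute algebra_simps)
  qed
  have dd: "0 < inner d d" using neg by (metis inner_eq_zero_iff inner_zero_right less_le inner_ge_zero)
  define t where "t = min 1 (- inner r d / inner d d)"
  have t0: "0 < t" using neg dd by (simp add: t_def divide_neg_pos)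
  have t1: "t \<le> 1" by (simp add: t_def)
  have "t * inner d d \<le> - inner r d" using dd by (simp add: t_def min_def field_simps split: if_splits)
  then have "2 * inner r d + t * inner d d < 0" using neg by linarith
  then have "t * (2 * inner r d + t * inner d d) < 0" using t0 by (simp add: mult_pos_neg)
  moreover have "0 \<le> 2 * t * inner r d + t * t * inner d d" using key[of t] t0 t1 by linarith
  ultimately show False by (simp add: algebra_simps)
qed

lemma compact_box01: "compact (box01 E)"
proof -
  have "box01 E = cbox 0 (\<chi> i. if i \<in> Pidx E then 1 else 0)"
  proof (rule set_eqI)
    fix x :: "(real, 'a \<times> 'a) vec"
    show "x \<in> box01 E \<longleftrightarrow> x \<in> cbox 0 (\<chi> i. if i \<in> Pidx E then 1 else 0)"
    proof
      assume x: "x \<in> box01 E"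
      show "x \<in> cbox 0 (\<chi> i. if i \<in> Pidx E then 1 else 0)" unfolding mem_box_cart
      proof
        fix i show "0 $ i \<le> x $ i \<and> x $ i \<le> (\<chi> i. if i \<in> Pidx E then 1 else 0) $ i"
        proof (cases "i \<in> Pidx E")
          case True then show ?thesis using x unfolding box01_def by simp
        next
          case False
          have "x \<in> Rm E" using x unfolding box01_def by blast
          then have "x $ i = 0" using False unfolding Rm_def by blast
          then show ?thesis using False by simp
        qed
      qed
    next
      assume H: "x \<in> cbox 0 (\<chi> i. if i \<in> Pidx E then 1 else 0)"
      have H2: "0 \<le> x $ i \<and> x $ i \<le> (if i \<in> Pidx E then 1 else 0)" for i
        using H unfolding mem_box_cart by (metis vec_lambda_beta zero_index)
      have "x \<in> Rm E" unfolding Rm_def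
      proof (intro CollectI allI impI)
        fix i assume "i \<notin> Pidx E" then show "x $ i = 0" using H2[of i] by auto
      qed
      moreover have "\<forall>i\<in>Pidx E. 0 \<le> x $ i \<and> x $ i \<le> 1"
      proof
        fix i assume "i \<in> Pidx E" then show "0 \<le> x $ i \<and> x $ i \<le> 1" using H2[of i] by simp
      qed
      ultimately show "x \<in> box01 E" unfolding box01_def by blast
    qed
  qed
  then show ?thesis by simp
qed

lemma INF_min: "x0 \<in> S \<Longrightarrow> (\<And>x. x \<in> S \<Longrightarrow> f x0 \<le> f x) \<Longrightarrow> (INF x\<in>S. f x) = (f x0::real)"
  by (rule cInf_eq_minimum) auto

lemma lower:
  fixes A :: "'v::{linorder,finite} \<Rightarrow> 'v \<Rightarrow> real"
  assumes A_nonneg: "\<forall>u v. 0 \<le> A u v" and A_edge: "\<forall>u v. 0 < A u v \<longleftrightarrow> (u, v) \<in> E"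
    and no_loops: "\<forall>u. (u, u) \<notin> E"
    and a0: "a0 \<in> box01 E" and y: "y \<in> cball 0 1"
  shows "- norm (fA A E a0 - g) \<le> Q1 A y - inner y g"
proof -
  have w: "inner y (fA A E a0) \<le> Q1 A y" by (rule weak[OF A_nonneg A_edge no_loops a0])
  have ny: "norm y \<le> 1" using y by simp
  have "inner (-y) (fA A E a0 - g) \<le> norm (-y) * norm (fA A E a0 - g)" by (rule norm_cauchy_schwarz)
  also have "\<dots> \<le> norm (fA A E a0 - g)" using ny by (simp add: mult_left_le_one_le)
  finally have "- inner y (fA A E a0 - g) \<le> norm (fA A E a0 - g)" by simp
  then show ?thesis using w by (simp add: inner_diff_right)
qed

lemma upper:
  fixes A :: "'v::{linorder,finite} \<Rightarrow> 'v \<Rightarrow> real"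
  assumes A_nonneg: "\<forall>u v. 0 \<le> A u v" and A_edge: "\<forall>u v. 0 < A u v \<longleftrightarrow> (u, v) \<in> E"
    and no_loops: "\<forall>u. (u, u) \<notin> E"
    and a0: "a0 \<in> box01 E" and mn: "\<forall>a\<in>box01 E. norm (fA A E a0 - g) \<le> norm (fA A E a - g)"
    and r0: "fA A E a0 \<noteq> g"
  shows "Q1 A (- ((1 / norm (fA A E a0 - g)) *\<^sub>R (fA A E a0 - g))) - inner (- ((1 / norm (fA A E a0 - g)) *\<^sub>R (fA A E a0 - g))) g \<le> - norm (fA A E a0 - g)"
proof -
  define r where "r = fA A E a0 - g"
  define y0 where "y0 = - ((1 / norm r) *\<^sub>R r)"
  have nr: "0 < norm r" using r0 by (simp add: r_def)
  obtain a' where a': "a' \<in> box01 E" "inner y0 (fA A E a') = Q1 A y0"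
    using attain[OF A_nonneg A_edge no_loops] by blast
  have vi: "0 \<le> inner r (fA A E a' - fA A E a0)"
    using varineq[OF no_loops a0 mn a'(1)] by (simp add: r_def)
  have "inner r (fA A E a' - g) = inner r (fA A E a' - fA A E a0) + inner r r"
    by (simp add: r_def inner_diff_right)
  then have ge: "norm r ^ 2 \<le> inner r (fA A E a' - g)" using vi by (simp add: power2_norm_eq_inner)
  have "Q1 A y0 - inner y0 g = inner y0 (fA A E a' - g)" using a'(2) by (simp add: inner_diff_right)
  also have "\<dots> = - (inner r (fA A E a' - g) / norm r)" by (simp add: y0_def)
  also have "\<dots> \<le> - (norm r ^ 2 / norm r)" using ge nr by (simp add: divide_right_mono)
  also have "\<dots> = - norm r" using nr by (simp add: power2_eq_square)
  finally show ?thesis by (simp add: y0_def r_def)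
qed

lemma Psi_eq:
  fixes A :: "'v::{linorder,finite} \<Rightarrow> 'v \<Rightarrow> real"
  assumes no_loops: "\<forall>u. (u, u) \<notin> E"
  shows "Psi A E g = (\<lambda>a. inner (lin A E a + (fA A E 0 - g)) (lin A E a + (fA A E 0 - g)))"
proof
  fix a show "Psi A E g a = inner (lin A E a + (fA A E 0 - g)) (lin A E a + (fA A E 0 - g))"
  proof -
    have eq: "fA A E a - g = lin A E a + (fA A E 0 - g)"
      using fA_lin[OF no_loops, of A a] by (simp add: algebra_simps)
    show ?thesis unfolding Psi_def power2_norm_eq_inner eq by (rule refl)
  qed
qed

lemma Psi_deriv:
  fixes A :: "'v::{linorder,finite} \<Rightarrow> 'v \<Rightarrow> real"
  assumes no_loops: "\<forall>u. (u, u) \<notin> E"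
  shows "(Psi A E g has_derivative (\<lambda>h. inner (lin A E a + (fA A E 0 - g)) (lin A E h) + inner (lin A E h) (lin A E a + (fA A E 0 - g)))) (at a)"
proof -
  have d: "((\<lambda>a. lin A E a + (fA A E 0 - g)) has_derivative lin A E) (at a)"
    using bounded_linear_imp_has_derivative[OF lin_bl] by (rule has_derivative_add_const)
  show ?thesis unfolding Psi_eq[OF no_loops] by (rule has_derivative_inner[OF d d])
qed

lemma lin_bound:
  fixes A :: "'v::{linorder,finite} \<Rightarrow> 'v \<Rightarrow> real"
  shows "norm (lin A E h) ^ 2 \<le> 2 * (MAX u\<in>UNIV. \<Sum>v\<in>UNIV. (A u v + A v u)\<^sup>2) * norm h ^ 2"
proof -
  define D where "D = (MAX u\<in>UNIV. \<Sum>v\<in>UNIV. (A u v + A v u)\<^sup>2)"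
  define N where "N u = {v. (u, v) \<in> Etil E}" for u
  have D: "(\<Sum>v\<in>N u. (A u v + A v u)\<^sup>2) \<le> D" for u
  proof -
    have "(\<Sum>v\<in>N u. (A u v + A v u)\<^sup>2) \<le> (\<Sum>v\<in>UNIV. (A u v + A v u)\<^sup>2)"
      by (rule sum_mono2) auto
    also have "\<dots> \<le> D" unfolding D_def by (rule Max_ge) auto
    finally show ?thesis .
  qed
  have "norm (lin A E h) ^ 2 = (\<Sum>u\<in>UNIV. (\<Sum>v\<in>N u. (A u v + A v u) * sg h u v)\<^sup>2)"
    unfolding power2_norm_eq_inner inner_vec_def lin_def N_def by (simp add: power2_eq_square)
  also have "\<dots> \<le> (\<Sum>u\<in>UNIV. D * (\<Sum>v\<in>N u. (sg h u v)\<^sup>2))"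
  proof (rule sum_mono)
    fix u
    have "(\<Sum>v\<in>N u. (A u v + A v u) * sg h u v)\<^sup>2 \<le> (\<Sum>v\<in>N u. (A u v + A v u)\<^sup>2) * (\<Sum>v\<in>N u. (sg h u v)\<^sup>2)"
      by (rule Cauchy_Schwarz_ineq_sum)
    also have "\<dots> \<le> D * (\<Sum>v\<in>N u. (sg h u v)\<^sup>2)"
      using D[of u] by (intro mult_right_mono sum_nonneg) auto
    finally show "(\<Sum>v\<in>N u. (A u v + A v u) * sg h u v)\<^sup>2 \<le> D * (\<Sum>v\<in>N u. (sg h u v)\<^sup>2)" .
  qed
  also have "\<dots> = D * (\<Sum>(u,v)\<in>Etil E. (sg h u v)\<^sup>2)"
    by (simp add: sum_distrib_left[symmetric] N_def sum_Etil)
  also have "(\<Sum>(u,v)\<in>Etil E. (sg h u v)\<^sup>2) \<le> 2 * norm h ^ 2"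
  proof -
    define P1 where "P1 = {p \<in> Etil E. fst p < snd p}"
    define P2 where "P2 = {p \<in> Etil E. \<not> fst p < snd p}"
    have split: "Etil E = P1 \<union> P2" "P1 \<inter> P2 = {}" by (auto simp: P1_def P2_def)
    have nh: "norm h ^ 2 = (\<Sum>i\<in>UNIV. (h $ i)\<^sup>2)"
      unfolding power2_norm_eq_inner inner_vec_def by (simp add: power2_eq_square)
    have s1: "(\<Sum>(u,v)\<in>P1. (sg h u v)\<^sup>2) \<le> norm h ^ 2"
    proof -
      have "(\<Sum>(u,v)\<in>P1. (sg h u v)\<^sup>2) = (\<Sum>i\<in>P1. (h $ i)\<^sup>2)"
        by (rule sum.cong) (auto simp: P1_def sg_def)
      also have "\<dots> \<le> (\<Sum>i\<in>UNIV. (h $ i)\<^sup>2)" by (rule sum_mono2) auto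
      finally show ?thesis using nh by simp
    qed
    have s2: "(\<Sum>(u,v)\<in>P2. (sg h u v)\<^sup>2) \<le> norm h ^ 2"
    proof -
      have "(\<Sum>(u,v)\<in>P2. (sg h u v)\<^sup>2) = (\<Sum>p\<in>P2. (h $ prod.swap p)\<^sup>2)"
        by (rule sum.cong) (auto simp: P2_def sg_def)
      also have "\<dots> = (\<Sum>i\<in>prod.swap ` P2. (h $ i)\<^sup>2)"
        by (subst sum.reindex) (auto intro: inj_onI)
      also have "\<dots> \<le> (\<Sum>i\<in>UNIV. (h $ i)\<^sup>2)" by (rule sum_mono2) auto
      finally show ?thesis using nh by simp
    qed
    have "(\<Sum>(u,v)\<in>Etil E. (sg h u v)\<^sup>2) = (\<Sum>(u,v)\<in>P1. (sg h u v)\<^sup>2) + (\<Sum>(u,v)\<in>P2. (sg h u v)\<^sup>2)"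
      unfolding split(1) by (rule sum.union_disjoint) (use split in auto)
    then show ?thesis using s1 s2 by linarith
  qed
  then have "D * (\<Sum>(u,v)\<in>Etil E. (sg h u v)\<^sup>2) \<le> D * (2 * norm h ^ 2)"
  proof (rule mult_left_mono)
    have "0 \<le> (\<Sum>v\<in>N undefined. (A undefined v + A v undefined)\<^sup>2)" by (rule sum_nonneg) auto
    then show "0 \<le> D" using D[of undefined] by linarith
  qed
  finally show ?thesis by (simp add: D_def algebra_simps)
qed

theorem theorem3:
  fixes A :: "'v::{linorder,finite} \<Rightarrow> 'v \<Rightarrow> real"
    and E :: "('v \<times> 'v) set"
    and g :: "(real, 'v) vec"
  assumes A_nonneg: "\<forall>u v. 0 \<le> A u v"
    and A_edge: "\<forall>u v. 0 < A u v \<longleftrightarrow> (u, v) \<in> E"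
    and no_loops: "\<forall>u. (u, u) \<notin> E"
  shows
    \<comment> \<open>(a): both minima are attained, and they are related as stated\<close>
    "((\<exists>y\<in>cball 0 1. Q1 A y - inner y g = (INF z\<in>cball 0 1. Q1 A z - inner z g))
      \<and> (\<exists>a\<in>box01 E. norm (fA A E a - g) = (INF b\<in>box01 E. norm (fA A E b - g)))
      \<and> (INF y\<in>cball 0 1. Q1 A y - inner y g) = - (INF a\<in>box01 E. norm (fA A E a - g)))
   \<and>
    \<comment> \<open>(b)\<close>
    (\<forall>a\<^sub>0\<in>box01 E. (\<forall>a\<in>box01 E. Psi A E g a\<^sub>0 \<le> Psi A E g a) \<longrightarrow> fA A E a\<^sub>0 \<noteq> g \<longrightarrow>
       (let y\<^sub>0 = - ((1 / norm (fA A E a\<^sub>0 - g)) *\<^sub>R (fA A E a\<^sub>0 - g)) in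
          y\<^sub>0 \<in> cball 0 1 \<and>
          (\<forall>y\<in>cball 0 1. Q1 A y\<^sub>0 - inner y\<^sub>0 g \<le> Q1 A y - inner y g)))
   \<and>
    \<comment> \<open>(c): Lipschitz continuity of the gradient of Psi on R^m\<close>
    (\<forall>a\<in>Rm E. \<forall>b\<in>Rm E. \<forall>ga gb.
       (Psi A E g has_derivative (\<lambda>h. inner ga h)) (at a) \<longrightarrow>
       (Psi A E g has_derivative (\<lambda>h. inner gb h)) (at b) \<longrightarrow>
       norm (ga - gb) \<le> 4 * (MAX u\<in>UNIV. \<Sum>v\<in>UNIV. (A u v + A v u)\<^sup>2) * norm (a - b))"
proof -
  let ?val = "\<lambda>y. Q1 A y - inner y g"
  let ?nr = "\<lambda>a. norm (fA A E a - g)"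
  have nrf: "(\<lambda>a. norm (fA A E a - g)) = (\<lambda>a. norm (lin A E a + (fA A E 0 - g)))"
  proof
    fix a show "norm (fA A E a - g) = norm (lin A E a + (fA A E 0 - g))"
      using fA_lin[OF no_loops, of A a] by (simp add: algebra_simps)
  qed
  have cont: "continuous_on (box01 E) (\<lambda>a. norm (fA A E a - g))"
    unfolding nrf by (intro continuous_intros linear_continuous_on[OF lin_bl])
  have ne: "box01 E \<noteq> {}"
  proof -
    have "0 \<in> box01 E" by (simp add: box01_def Rm_def)
    then show ?thesis by blast
  qed
  obtain as where as: "as \<in> box01 E" "\<forall>b\<in>box01 E. ?nr as \<le> ?nr b"
    using continuous_attains_inf[OF compact_box01 ne cont] by blast
  have lb: "\<forall>y\<in>cball 0 1. - ?nr as \<le> ?val y"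
    using lower[OF A_nonneg A_edge no_loops as(1)] by blast
  have "\<exists>y1\<in>cball 0 1. ?val y1 = - ?nr as"
  proof (cases "fA A E as = g")
    case True
    have "Q1 A 0 = 0" by (simp add: Q1_def)
    then show ?thesis using True by (intro bexI[of _ 0]) auto
  next
    case False
    define y0 where "y0 = - ((1 / norm (fA A E as - g)) *\<^sub>R (fA A E as - g))"
    have "norm y0 = 1" using False by (simp add: y0_def)
    then have y0c: "y0 \<in> cball 0 1" by simp
    have "?val y0 \<le> - ?nr as" unfolding y0_def by (rule upper[OF A_nonneg A_edge no_loops as False])
    then show ?thesis using lb y0c by (intro bexI[of _ y0]) (auto intro: order.antisym)
  qed
  then obtain y1 where y1: "y1 \<in> cball 0 1" "?val y1 = - ?nr as" by blast
  have INF1: "(INF z\<in>cball 0 1. ?val z) = ?val y1"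
    by (rule INF_min[OF y1(1)]) (use lb y1 in auto)
  have INF2: "(INF b\<in>box01 E. ?nr b) = ?nr as"
    by (rule INF_min[OF as(1)]) (use as in auto)
  have partA: "((\<exists>y\<in>cball 0 1. Q1 A y - inner y g = (INF z\<in>cball 0 1. Q1 A z - inner z g))
      \<and> (\<exists>a\<in>box01 E. norm (fA A E a - g) = (INF b\<in>box01 E. norm (fA A E b - g)))
      \<and> (INF y\<in>cball 0 1. Q1 A y - inner y g) = - (INF a\<in>box01 E. norm (fA A E a - g)))"
    using INF1 INF2 y1 as(1) by auto
  have partB: "\<forall>a\<^sub>0\<in>box01 E. (\<forall>a\<in>box01 E. Psi A E g a\<^sub>0 \<le> Psi A E g a) \<longrightarrow> fA A E a\<^sub>0 \<noteq> g \<longrightarrow>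
       (let y\<^sub>0 = - ((1 / norm (fA A E a\<^sub>0 - g)) *\<^sub>R (fA A E a\<^sub>0 - g)) in
          y\<^sub>0 \<in> cball 0 1 \<and>
          (\<forall>y\<in>cball 0 1. Q1 A y\<^sub>0 - inner y\<^sub>0 g \<le> Q1 A y - inner y g))"
  proof (intro ballI impI)
    fix a0 assume a0: "a0 \<in> box01 E" and mP: "\<forall>a\<in>box01 E. Psi A E g a0 \<le> Psi A E g a"
      and r0: "fA A E a0 \<noteq> g"
    have mn: "\<forall>a\<in>box01 E. ?nr a0 \<le> ?nr a"
    proof
      fix a assume "a \<in> box01 E"
      then have "?nr a0 ^ 2 \<le> ?nr a ^ 2" using mP by (simp add: Psi_def)
      then show "?nr a0 \<le> ?nr a" by (rule power2_le_imp_le) simp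
    qed
    define y0 where "y0 = - ((1 / norm (fA A E a0 - g)) *\<^sub>R (fA A E a0 - g))"
    have "norm y0 = 1" using r0 by (simp add: y0_def)
    then have y0c: "y0 \<in> cball 0 1" by simp
    have up: "?val y0 \<le> - ?nr a0" unfolding y0_def by (rule upper[OF A_nonneg A_edge no_loops a0 mn r0])
    have "\<forall>y\<in>cball 0 1. ?val y0 \<le> ?val y"
    proof
      fix y :: "(real, 'v) vec" assume "y \<in> cball 0 1"
      then have "- ?nr a0 \<le> ?val y" by (rule lower[OF A_nonneg A_edge no_loops a0])
      then show "?val y0 \<le> ?val y" using up by linarith
    qed
    then show "let y\<^sub>0 = - ((1 / norm (fA A E a0 - g)) *\<^sub>R (fA A E a0 - g)) in
          y\<^sub>0 \<in> cball 0 1 \<and> (\<forall>y\<in>cball 0 1. Q1 A y\<^sub>0 - inner y\<^sub>0 g \<le> Q1 A y - inner y g)"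
      using y0c unfolding y0_def Let_def by blast
  qed
  have partC: "\<forall>a\<in>Rm E. \<forall>b\<in>Rm E. \<forall>ga gb.
       (Psi A E g has_derivative (\<lambda>h. inner ga h)) (at a) \<longrightarrow>
       (Psi A E g has_derivative (\<lambda>h. inner gb h)) (at b) \<longrightarrow>
       norm (ga - gb) \<le> 4 * (MAX u\<in>UNIV. \<Sum>v\<in>UNIV. (A u v + A v u)\<^sup>2) * norm (a - b)"
  proof (intro ballI allI impI)
    fix a b ga gb
    assume da: "(Psi A E g has_derivative (\<lambda>h. inner ga h)) (at a)"
      and db: "(Psi A E g has_derivative (\<lambda>h. inner gb h)) (at b)"
    define D where "D = (MAX u\<in>UNIV. \<Sum>v\<in>UNIV. (A u v + A v u)\<^sup>2)"
    define c where "c = fA A E 0 - g"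
    let ?L = "lin A E"
    interpret L: linear "lin A E" by (rule lin_linear)
    have ea: "(\<lambda>h. inner ga h) = (\<lambda>h. inner (?L a + c) (?L h) + inner (?L h) (?L a + c))"
      using has_derivative_unique[OF da Psi_deriv[OF no_loops]] by (simp add: c_def)
    have eb: "(\<lambda>h. inner gb h) = (\<lambda>h. inner (?L b + c) (?L h) + inner (?L h) (?L b + c))"
      using has_derivative_unique[OF db Psi_deriv[OF no_loops]] by (simp add: c_def)
    define k where "k = ga - gb"
    have "inner k k = inner ga k - inner gb k" by (simp add: k_def inner_diff_left)
    also have "\<dots> = 2 * inner (?L (a - b)) (?L k)"
      using fun_cong[OF ea, of k] fun_cong[OF eb, of k]
      by (simp add: L.diff inner_diff_left inner_add_left inner_commute inner_diff_right inner_add_right algebra_simps)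
    finally have kk: "norm k ^ 2 = 2 * inner (?L (a - b)) (?L k)" by (simp add: power2_norm_eq_inner)
    have D0: "0 \<le> D"
    proof -
      have "(\<Sum>v\<in>UNIV. (A undefined v + A v undefined)\<^sup>2) \<le> D" unfolding D_def by (rule Max_ge) auto
      moreover have "0 \<le> (\<Sum>v\<in>UNIV. (A undefined v + A v undefined)\<^sup>2)" by (rule sum_nonneg) auto
      ultimately show ?thesis by linarith
    qed
    have nb: "norm (?L x) \<le> sqrt (2 * D) * norm x" for x
    proof -
      have "norm (?L x) ^ 2 \<le> (sqrt (2 * D) * norm x) ^ 2"
        using lin_bound[of A E x] D0 by (simp add: D_def power_mult_distrib)
      then show ?thesis by (rule power2_le_imp_le) (use D0 in simp)
    qed
    have "norm k ^ 2 \<le> 2 * (norm (?L (a - b)) * norm (?L k))"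
      using kk norm_cauchy_schwarz[of "?L (a - b)" "?L k"] by linarith
    also have "\<dots> \<le> 2 * ((sqrt (2 * D) * norm (a - b)) * (sqrt (2 * D) * norm k))"
      using nb[of "a - b"] nb[of k] D0 by (intro mult_left_mono mult_mono) auto
    also have "\<dots> = (4 * D * norm (a - b)) * norm k"
      using D0 by (simp add: algebra_simps)
    finally have main: "norm k * norm k \<le> (4 * D * norm (a - b)) * norm k" by (simp add: power2_eq_square)
    show "norm (ga - gb) \<le> 4 * (MAX u\<in>UNIV. \<Sum>v\<in>UNIV. (A u v + A v u)\<^sup>2) * norm (a - b)"
    proof (cases "norm k = 0")
      case True then show ?thesis using D0 by (simp add: k_def D_def[symmetric])
    next
      case False then have "0 < norm k" by simp
      then have "norm k \<le> 4 * D * norm (a - b)" using main by (simp add: mult_le_cancel_right)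
      then show ?thesis by (simp add: k_def D_def)
    qed
  qed
  show ?thesis using partA partB partC by blast
qed

end
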